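(* Let $f$ be an expansive Lorenz map with critical point $c$ and $H=(a,b)$ a hole with $a\le c\le b$, $a\ne b$. If $\tilde S^+_f(a,b)\not\subseteq\{0^\infty,1^\infty\}$ and the pair $(\mathbf b,\mathbf a)$ is not weak-admissible, then there exist $s,t\in\{0,1\}^{\mathbb N}$ such that $(1s,0t)$ is weak-admissible and $\Omega(1s,0t)=\tilde S^+_f(a,b)$.
   Context: Lorenz map: $f:[0,1]\to[0,1]$ with $c\in(0,1)$, $f$ strictly increasing on $[0,c)$ and $(c,1]$, $\lim_{x\uparrow c}f=1$, $\lim_{x\downarrow c}f=0$; expansive if $\bigcup_{n\ge0}f^{-n}(c)$ is dense. $\preceq$ is the lexicographic order on $\{0,1\}^{\mathbb N}$, $\sigma$ the left shift. Kneading sequences $\tau_f(x)=\epsilon_0\epsilon_1\cdots$ ($\epsilon_i=0$ if $f^i(x)<c$, $1$ if $f^i(x)>c$), and $\tau_f(x\pm)=\lim_{y\to x^\pm}\tau_f(y)$ over non-preimages $y$ of $c$. Put $\mathbf a=\tau_f(a-)$, $\mathbf b=\tau_f(b+)$, $\tilde S^+_f(a,b)=\{w: \sigma(\mathbf b)\preceq\sigma^n(w)\preceq\sigma(\mathbf a)\ \forall n\ge0\}$, and $\Omega(1s,0t)=\{w:s\preceq\sigma^n(w)\preceq t\ \forall n\ge0\}$. A pair $(k_+,k_-)$ of sequences is weak-admissible if $\sigma(k_+)\preceq\sigma^n(k_+)\preceq\sigma(k_-)$ and $\sigma(k_+)\preceq\sigma^n(k_-)\preceq\sigma(k_-)$ for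 all $n\ge0$. *)

theory Defs
  imports "HOL-Analysis.Analysis"
begin

text \<open>Sequences in {0,1}^N are modelled as nat => bool, with False = 0 and True = 1.\<close>

type_synonym seq = "nat \<Rightarrow> bool"

definition shift :: "seq \<Rightarrow> seq" where
  "shift w = (\<lambda>i. w (Suc i))"

definition shiftn :: "nat \<Rightarrow> seq \<Rightarrow> seq" where
  "shiftn n w = (\<lambda>i. w (i + n))"

definition scons :: "bool \<Rightarrow> seq \<Rightarrow> seq" where
  "scons e w = (\<lambda>i. if i = 0 then e else w (i - 1))"

definition lex_less :: "seq \<Rightarrow> seq \<Rightarrow> bool" where
  "lex_less w v \<longleftrightarrow> (\<exists>n. (\<forall>i<n. w i = v i) \<and> \<not> w n \<and> v n)"

definition lex_le :: "seq \<Rightarrow> seq \<Rightarrow> bool" where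
  "lex_le w v \<longleftrightarrow> w = v \<or> lex_less w v"

definition lorenz_map :: "(real \<Rightarrow> real) \<Rightarrow> real \<Rightarrow> bool" where
  "lorenz_map f c \<longleftrightarrow> 0 < c \<and> c < 1 \<and> f ` {0..1} \<subseteq> {0..1}
     \<and> strict_mono_on {0..<c} f \<and> strict_mono_on {c<..1} f
     \<and> (f \<longlongrightarrow> 1) (at_left c) \<and> (f \<longlongrightarrow> 0) (at_right c)"

definition preimage_c :: "(real \<Rightarrow> real) \<Rightarrow> real \<Rightarrow> real \<Rightarrow> bool" where
  "preimage_c f c x \<longleftrightarrow> (\<exists>n. (f ^^ n) x = c)"

definition expansive :: "(real \<Rightarrow> real) \<Rightarrow> real \<Rightarrow> bool" where
  "expansive f c \<longleftrightarrow> {0..1} \<subseteq> closure {x \<in> {0..1}. preimage_c f c x}"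

text \<open>Kneading sequence of a point (meaningful for non-preimages of c).\<close>
definition kneading :: "(real \<Rightarrow> real) \<Rightarrow> real \<Rightarrow> real \<Rightarrow> seq" where
  "kneading f c x = (\<lambda>i. c < (f ^^ i) x)"

text \<open>One-sided limits (coordinatewise, i.e. in the product topology) over non-preimages of c.\<close>
definition kneading_plus :: "(real \<Rightarrow> real) \<Rightarrow> real \<Rightarrow> real \<Rightarrow> seq" where
  "kneading_plus f c x = (\<lambda>i. THE e. eventually (\<lambda>y. kneading f c y i = e)
       (at x within {y. x < y \<and> y \<le> 1 \<and> \<not> preimage_c f c y}))"

definition kneading_minus :: "(real \<Rightarrow> real) \<Rightarrow> real \<Rightarrow> real \<Rightarrow> seq" where
  "kneading_minus f c x = (\<lambda>i. THE e. eventually (\<lambda>y. kneading f c y i = e)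
       (at x within {y. 0 \<le> y \<and> y < x \<and> \<not> preimage_c f c y}))"

text \<open>tilde S^+_f(a,b), with bold a = kneading_minus a, bold b = kneading_plus b.\<close>
definition tildeS :: "(real \<Rightarrow> real) \<Rightarrow> real \<Rightarrow> real \<Rightarrow> real \<Rightarrow> seq set" where
  "tildeS f c a b = {w. \<forall>n. lex_le (shift (kneading_plus f c b)) (shiftn n w)
                          \<and> lex_le (shiftn n w) (shift (kneading_minus f c a))}"

text \<open>Omega(1s,0t) = {w. s <= sigma^n w <= t for all n}.\<close>
definition Omega :: "seq \<Rightarrow> seq \<Rightarrow> seq set" where
  "Omega s t = {w. \<forall>n. lex_le s (shiftn n w) \<and> lex_le (shiftn n w) t}"

definition weak_admissible :: "seq \<Rightarrow> seq \<Rightarrow> bool" where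
  "weak_admissible kp km \<longleftrightarrow>
     (\<forall>n. lex_le (shift kp) (shiftn n kp) \<and> lex_le (shiftn n kp) (shift km)
        \<and> lex_le (shift kp) (shiftn n km) \<and> lex_le (shiftn n km) (shift km))"

end

theory Submission
  imports Defs
begin

lemma shiftn0[simp]: "shiftn 0 w = w" by (simp add: shiftn_def)
lemma shiftn_shiftn[simp]: "shiftn m (shiftn n w) = shiftn (m+n) w"
  by (simp add: shiftn_def add.assoc)

lemma lex_less_irrefl: "\<not> lex_less w w" by (auto simp: lex_less_def)

lemma lex_less_trans: assumes "lex_less u v" "lex_less v w" shows "lex_less u w"
proof -
  from assms obtain n m where n: "\<forall>i<n. u i = v i" "\<not> u n" "v n"
    and m: "\<forall>i<m. v i = w i" "\<not> v m" "w m" by (auto simp: lex_less_def)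
  show ?thesis
  proof (cases "n < m")
    case True
    then show ?thesis using n m unfolding lex_less_def by (intro exI[of _ n]) auto
  next
    case False
    then have "m < n" using n m by (metis nat_neq_iff)
    then show ?thesis using n m unfolding lex_less_def by (intro exI[of _ m]) auto
  qed
qed

lemma lex_le_trans: "lex_le u v \<Longrightarrow> lex_le v w \<Longrightarrow> lex_le u w"
  unfolding lex_le_def using lex_less_trans by blast

lemma lex_total: assumes "w \<noteq> v" shows "lex_less w v \<or> lex_less v w"
proof -
  from assms obtain k where "w k \<noteq> v k" by auto
  define n where "n = (LEAST n. w n \<noteq> v n)"
  have d: "w n \<noteq> v n" unfolding n_def using \<open>w k \<noteq> v k\<close> by (rule LeastI)
  have a: "\<forall>i<n. w i = v i" unfolding n_def using not_less_Least by blast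
  show ?thesis
  proof (cases "v n")
    case True then show ?thesis using d a unfolding lex_less_def by auto
  next
    case False then show ?thesis using d a unfolding lex_less_def
      by (intro disjI2 exI[of _ n]) auto
  qed
qed

lemma not_less_le: "\<not> lex_less w v \<Longrightarrow> lex_le v w"
  unfolding lex_le_def using lex_total by blast

lemma le_not_less: "lex_le v w \<Longrightarrow> \<not> lex_less w v"
  unfolding lex_le_def using lex_less_trans lex_less_irrefl by blast

lemma lex_less_prefix:
  assumes "lex_less w v" shows "\<exists>N. \<forall>u. (\<forall>i<N. u i = w i) \<longrightarrow> lex_less u v"
proof -
  from assms obtain n where n: "\<forall>i<n. w i = v i" "\<not> w n" "v n" by (auto simp: lex_less_def)
  show ?thesis
    by (rule exI[of _ "Suc n"]) (use n in \<open>auto simp: lex_less_def intro!: exI[of _ n]\<close>)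
qed

lemma lex_less_prefix2:
  assumes "lex_less v w" shows "\<exists>N. \<forall>u. (\<forall>i<N. u i = w i) \<longrightarrow> lex_less v u"
proof -
  from assms obtain n where n: "\<forall>i<n. v i = w i" "\<not> v n" "w n" by (auto simp: lex_less_def)
  show ?thesis
    by (rule exI[of _ "Suc n"]) (use n in \<open>auto simp: lex_less_def intro!: exI[of _ n]\<close>)
qed

lemma closed_lower:
  assumes "\<And>N. \<exists>u. lex_le L u \<and> (\<forall>i<N. u i = v i)"
  shows "lex_le L v"
proof (rule not_less_le, rule notI)
  assume "lex_less v L"
  then obtain N where N: "\<And>u. (\<forall>i<N. u i = v i) \<Longrightarrow> lex_less u L"
    using lex_less_prefix by blast
  obtain u where "lex_le L u" "\<forall>i<N. u i = v i" using assms by blast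
  then show False using N le_not_less by blast
qed

lemma closed_upper:
  assumes "\<And>N. \<exists>u. lex_le u U \<and> (\<forall>i<N. u i = v i)"
  shows "lex_le v U"
proof (rule not_less_le, rule notI)
  assume "lex_less U v"
  then obtain N where N: "\<And>u. (\<forall>i<N. u i = v i) \<Longrightarrow> lex_less U u"
    using lex_less_prefix2 by blast
  obtain u where "lex_le u U" "\<forall>i<N. u i = v i" using assms by blast
  then show False using N le_not_less by blast
qed

primrec pref :: "seq set \<Rightarrow> nat \<Rightarrow> seq" where
  "pref X 0 = (\<lambda>_. False)"
| "pref X (Suc n) = (pref X n)(n := \<not> (\<exists>w\<in>X. (\<forall>i<n. w i = pref X n i) \<and> \<not> w n))"

lemma pref_stable: "i < m \<Longrightarrow> m \<le> n \<Longrightarrow> pref X n i = pref X m i"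
  by (induction n) (auto simp: le_Suc_eq)

lemma pref_inv: "X \<noteq> {} \<Longrightarrow> \<exists>w\<in>X. \<forall>i<n. w i = pref X n i"
proof (induction n)
  case 0 then show ?case by auto
next
  case (Suc n)
  then obtain w where w: "w \<in> X" "\<forall>i<n. w i = pref X n i" by auto
  show ?case
  proof (cases "\<exists>w\<in>X. (\<forall>i<n. w i = pref X n i) \<and> \<not> w n")
    case True
    then obtain u where "u \<in> X" "\<forall>i<n. u i = pref X n i" "\<not> u n" by auto
    then show ?thesis by (intro bexI[of _ u]) (auto simp: less_Suc_eq)
  next
    case False
    then have "w n" using w by auto
    then show ?thesis using w False by (intro bexI[of _ w]) (auto simp: less_Suc_eq)
  qed
qed

definition smin :: "seq set \<Rightarrow> seq" where "smin X = (\<lambda>n. pref X (Suc n) n)"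

lemma smin_pref: "i < n \<Longrightarrow> smin X i = pref X n i"
  unfolding smin_def by (metis Suc_leI lessI pref_stable)

lemma smin_le: assumes "w \<in> X" shows "lex_le (smin X) w"
proof (rule not_less_le, rule notI)
  assume "lex_less w (smin X)"
  then obtain n where n: "\<forall>i<n. w i = smin X i" "\<not> w n" "smin X n" by (auto simp: lex_less_def)
  have "\<forall>i<n. w i = pref X n i" using n(1) smin_pref by auto
  then have "\<exists>w\<in>X. (\<forall>i<n. w i = pref X n i) \<and> \<not> w n" using assms n(2) by blast
  moreover have "pref X (Suc n) n = (\<not> (\<exists>w\<in>X. (\<forall>i<n. w i = pref X n i) \<and> \<not> w n))"
    by (simp only: pref.simps fun_upd_same)
  ultimately have "pref X (Suc n) n = False" by blast
  moreover have "smin X n = pref X (Suc n) n" by (simp only: smin_def)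
  ultimately show False using n(3) by simp
qed

lemma smin_in:
  assumes "X = Omega L U" "X \<noteq> {}"
  shows "smin X \<in> X"
proof -
  have ap: "\<exists>w\<in>X. \<forall>i<N. w i = smin X i" for N
    using pref_inv[OF assms(2), of N] smin_pref by auto
  have "lex_le L (shiftn m (smin X)) \<and> lex_le (shiftn m (smin X)) U" for m
  proof
    show "lex_le L (shiftn m (smin X))"
    proof (rule closed_lower)
      fix N
      obtain w where "w \<in> X" "\<forall>i<N+m. w i = smin X i" using ap by blast
      then show "\<exists>u. lex_le L u \<and> (\<forall>i<N. u i = shiftn m (smin X) i)"
        using assms(1) by (intro exI[of _ "shiftn m w"]) (auto simp: Omega_def shiftn_def)
    qed
    show "lex_le (shiftn m (smin X)) U"
    proof (rule closed_upper)
      fix N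
      obtain w where "w \<in> X" "\<forall>i<N+m. w i = smin X i" using ap by blast
      then show "\<exists>u. lex_le u U \<and> (\<forall>i<N. u i = shiftn m (smin X) i)"
        using assms(1) by (intro exI[of _ "shiftn m w"]) (auto simp: Omega_def shiftn_def)
    qed
  qed
  then show ?thesis using assms(1) by (simp add: Omega_def)
qed

definition neg :: "seq \<Rightarrow> seq" where "neg w = (\<lambda>i. \<not> w i)"

lemma neg_neg[simp]: "neg (neg w) = w" by (simp add: neg_def)
lemma neg_less: "lex_less (neg w) (neg v) \<longleftrightarrow> lex_less v w"
  unfolding lex_less_def neg_def by auto
lemma neg_le: "lex_le (neg w) (neg v) \<longleftrightarrow> lex_le v w"
  unfolding lex_le_def using neg_less by (metis neg_neg)
lemma neg_shiftn: "shiftn n (neg w) = neg (shiftn n w)" by (simp add: shiftn_def neg_def)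

lemma neg_Omega: "neg ` Omega L U = Omega (neg U) (neg L)"
proof -
  have "w \<in> Omega L U \<longleftrightarrow> neg w \<in> Omega (neg U) (neg L)" for w
    by (simp add: Omega_def neg_shiftn neg_le conj_commute)
  then show ?thesis by (auto simp: image_iff) (metis neg_neg)
qed

lemma min_max:
  assumes "X = Omega L U" "X \<noteq> {}"
  shows "\<exists>s\<in>X. \<exists>t\<in>X. \<forall>w\<in>X. lex_le s w \<and> lex_le w t"
proof -
  have Y: "neg ` X = Omega (neg U) (neg L)" "neg ` X \<noteq> {}" using assms neg_Omega by auto
  have "smin (neg ` X) \<in> neg ` X" using smin_in[OF Y] .
  then have t: "neg (smin (neg ` X)) \<in> X" by auto
  have "lex_le w (neg (smin (neg ` X)))" if "w \<in> X" for w
    using smin_le[of "neg w" "neg ` X"] that neg_le by (metis image_eqI neg_neg)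
  then show ?thesis using smin_in[OF assms] smin_le t by blast
qed

lemma shiftn_in: "w \<in> Omega L U \<Longrightarrow> shiftn m w \<in> Omega L U"
  by (simp add: Omega_def)

lemma shiftn_scons_Suc[simp]: "shiftn (Suc m) (scons e w) = shiftn m w"
  by (simp add: shiftn_def scons_def)
lemma shift_scons[simp]: "shift (scons e w) = w"
  by (simp add: shift_def scons_def)

lemma scons_shift: "b 0 = e \<Longrightarrow> scons e (shift b) = b"
  by (rule ext) (auto simp: scons_def shift_def)

lemma less_scons1: assumes "lex_less a (shift b)" "b 0 = e" shows "lex_less (scons e a) b"
proof -
  from assms obtain n where n: "\<forall>i<n. a i = b (Suc i)" "\<not> a n" "b (Suc n)"
    by (auto simp: lex_less_def shift_def)
  have "\<forall>i<Suc n. scons e a i = b i"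
  proof (intro allI impI)
    fix i assume "i < Suc n"
    then show "scons e a i = b i" using n assms(2) by (cases i) (auto simp: scons_def)
  qed
  then show ?thesis using n unfolding lex_less_def by (intro exI[of _ "Suc n"]) (auto simp: scons_def)
qed

lemma less_scons2: assumes "lex_less (shift a) b" "a 0 = e" shows "lex_less a (scons e b)"
proof -
  from assms obtain n where n: "\<forall>i<n. a (Suc i) = b i" "\<not> a (Suc n)" "b n"
    by (auto simp: lex_less_def shift_def)
  have "\<forall>i<Suc n. a i = scons e b i"
  proof (intro allI impI)
    fix i assume "i < Suc n"
    then show "a i = scons e b i" using n assms(2) by (cases i) (auto simp: scons_def)
  qed
  then show ?thesis using n unfolding lex_less_def by (intro exI[of _ "Suc n"]) (auto simp: scons_def)
qed

lemma le_scons1: "lex_le a (shift b) \<Longrightarrow> b 0 = e \<Longrightarrow> lex_le (scons e a) b"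
  unfolding lex_le_def using less_scons1 scons_shift by blast

lemma le_scons2: "lex_le (shift a) b \<Longrightarrow> a 0 = e \<Longrightarrow> lex_le a (scons e b)"
proof -
  assume a: "lex_le (shift a) b" "a 0 = e"
  show ?thesis
  proof (cases "shift a = b")
    case True
    then show ?thesis using scons_shift[of a e] a(2) by (simp add: lex_le_def)
  next
    case False
    then show ?thesis using a less_scons2 by (simp add: lex_le_def)
  qed
qed

lemma shift_eq: "shift w = shiftn 1 w" by (simp add: shift_def shiftn_def)

theorem lemma3p4:
  fixes f :: "real \<Rightarrow> real" and c a b :: real
  assumes "lorenz_map f c"
    and "expansive f c"
    and "0 \<le> a" and "b \<le> 1"
    and "a \<le> c" and "c \<le> b" and "a \<noteq> b"
    and "\<not> tildeS f c a b \<subseteq> {(\<lambda>_. False), (\<lambda>_. True)}"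
    and "\<not> weak_admissible (kneading_plus f c b) (kneading_minus f c a)"
  shows "\<exists>s t. weak_admissible (scons True s) (scons False t)
               \<and> Omega s t = tildeS f c a b"
proof -
  define L where "L = shift (kneading_plus f c b)"
  define U where "U = shift (kneading_minus f c a)"
  define X where "X = tildeS f c a b"
  have XO: "X = Omega L U" unfolding X_def L_def U_def tildeS_def Omega_def by simp
  obtain w where w: "w \<in> X" "w \<noteq> (\<lambda>_. False)" "w \<noteq> (\<lambda>_. True)"
    using assms(8) X_def by auto
  then have ne: "X \<noteq> {}" by auto
  obtain s t where st: "s \<in> X" "t \<in> X" "\<And>v. v \<in> X \<Longrightarrow> lex_le s v \<and> lex_le v t"
    using min_max[OF XO ne] by blast
  obtain k where k: "\<not> w k" using w(3) by auto
  obtain j where j: "w j" using w(2) by auto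
  have "lex_le s (shiftn k w)" using st(3) shiftn_in w(1) XO by blast
  then have s0: "\<not> s 0" using k unfolding lex_le_def lex_less_def shiftn_def
    by (metis add_0 less_nat_zero_code not_gr_zero)
  have "lex_le (shiftn j w) t" using st(3) shiftn_in w(1) XO by blast
  then have t0: "t 0" using j unfolding lex_le_def lex_less_def shiftn_def
    by (metis add_0 less_nat_zero_code not_gr_zero)
  have sh: "\<And>m v. v \<in> X \<Longrightarrow> shiftn m v \<in> X" using shiftn_in XO by blast
  have wa: "weak_admissible (scons True s) (scons False t)"
    unfolding weak_admissible_def shift_scons
  proof (intro allI conjI)
    fix n
    show "lex_le s (shiftn n (scons True s))"
    proof (cases n)
      case 0 then show ?thesis using s0
        by (auto simp: lex_le_def lex_less_def scons_def intro!: exI[of _ 0])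
    next
      case (Suc m) then show ?thesis using st sh by simp
    qed
    show "lex_le (shiftn n (scons True s)) t"
    proof (cases n)
      case 0 then show ?thesis using t0 st sh shift_eq by (simp add: le_scons1)
    next
      case (Suc m) then show ?thesis using st sh by simp
    qed
    show "lex_le s (shiftn n (scons False t))"
    proof (cases n)
      case 0 then show ?thesis using s0 st sh shift_eq by (simp add: le_scons2)
    next
      case (Suc m) then show ?thesis using st sh by simp
    qed
    show "lex_le (shiftn n (scons False t)) t"
    proof (cases n)
      case 0 then show ?thesis using t0
        by (auto simp: lex_le_def lex_less_def scons_def intro!: exI[of _ 0])
    next
      case (Suc m) then show ?thesis using st sh by simp
    qed
  qed
  have Ls: "lex_le L s" and tU: "lex_le t U"
    using st XO by (auto simp: Omega_def dest: spec[of _ 0])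
  have "Omega s t = X"
  proof
    show "Omega s t \<subseteq> X"
      unfolding XO Omega_def using Ls tU lex_le_trans by blast
    show "X \<subseteq> Omega s t"
      unfolding Omega_def using st sh by blast
  qed
  then show ?thesis using wa X_def by blast
qed

end
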